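(* Let $p\ge 1$ and let $Y:\overline{\mathcal{K}}_o^n\to\overline{\mathcal{K}}_o^n$ be an $L_p$-Minkowski valuation. Suppose that for every $n$-dimensional $K\in\overline{\mathcal{K}}_o^n$, every $\phi\in SL(n)$ and every $\lambda>0$ one has $Y(\phi K)=\phi\,YK$ (respectively $Y(\phi K)=\phi^{-t}YK$) and $Y(\lambda K)=\lambda^qYK$. Then these identities hold for every $K\in\overline{\mathcal{K}}_o^n$, i.e. $Y$ is $SL(n)$ covariant (respectively contravariant) and homogeneous of degree $q$ on all of $\overline{\mathcal{K}}_o^n$.
   Context: A convex body is a nonempty compact convex subset of $\mathbb{R}^n$. $\overline{\mathcal{K}}_o^n$ denotes the set of all convex bodies in $\mathbb{R}^n$ containing the origin (of any dimension). $h_K(x)=\max\{x\cdot y:y\in K\}$ is the support function; $\phi^{-t}$ is the inverse of the transpose of $\phi$. A map $Y:\overline{\mathcal{K}}_o^n\to\overline{\mathcal{K}}_o^n$ is an $L_p$-Minkowski valuation if $h_{Y(K\cup L)}^p+h_{Y(K\cap L)}^p=h_{YK}^p+h_{YL}^p$ whenever $K,L,K\cup L\in\overline{\mathcal{K}}_o^n$. *)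

theory Defs
  imports "HOL-Analysis.Analysis"
begin

definition convex_body :: "(real^'n) set \<Rightarrow> bool" where
  "convex_body K \<longleftrightarrow> K \<noteq> {} \<and> compact K \<and> convex K"

definition Ko :: "(real^'n) set set" where
  "Ko = {K. convex_body K \<and> 0 \<in> K}"

definition support_fun :: "(real^'n) set \<Rightarrow> real^'n \<Rightarrow> real" where
  "support_fun K x = Sup ((\<lambda>y. x \<bullet> y) ` K)"

definition Lp_Minkowski_valuation :: "real \<Rightarrow> ((real^'n) set \<Rightarrow> (real^'n) set) \<Rightarrow> bool" where
  "Lp_Minkowski_valuation p Y \<longleftrightarrow>
     (\<forall>K\<in>Ko. Y K \<in> Ko) \<and>
     (\<forall>K L. K \<in> Ko \<longrightarrow> L \<in> Ko \<longrightarrow> K \<union> L \<in> Ko \<longrightarrow>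
        (\<forall>x. support_fun (Y (K \<union> L)) x powr p + support_fun (Y (K \<inter> L)) x powr p
             = support_fun (Y K) x powr p + support_fun (Y L) x powr p))"

definition SL :: "(real^'n^'n) set" where
  "SL = {A. det A = 1}"

definition lin_image :: "real^'n^'n \<Rightarrow> (real^'n) set \<Rightarrow> (real^'n) set" where
  "lin_image A K = (\<lambda>x. A *v x) ` K"

definition inv_transpose :: "real^'n^'n \<Rightarrow> real^'n^'n" where
  "inv_transpose A = matrix_inv (transpose A)"

end

theory Submission
  imports Defs
begin

lemma Ko_bdd: "M \<in> Ko \<Longrightarrow> bdd_above ((\<lambda>y. x \<bullet> y) ` M)"
proof -
  assume "M \<in> Ko"
  then have "bounded M" by (simp add: Ko_def convex_body_def compact_imp_bounded)
  then have "bounded ((\<lambda>y. x \<bullet> y) ` M)"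
    by (rule bounded_linear_image) (rule bounded_linear_inner_right)
  then show "bdd_above ((\<lambda>y. x \<bullet> y) ` M)" by (rule bounded_imp_bdd_above)
qed

lemma sf_nonneg: "M \<in> Ko \<Longrightarrow> support_fun M x \<ge> 0"
proof -
  assume M: "M \<in> Ko"
  then have "0 \<in> M" by (simp add: Ko_def)
  then have "x \<bullet> 0 \<le> support_fun M x"
    unfolding support_fun_def using Ko_bdd[OF M] by (intro cSup_upper imageI)
  then show ?thesis by simp
qed

lemma sf_lin:
  fixes g :: "real^'n \<Rightarrow> real^'n"
  assumes "linear g"
  shows "support_fun (g ` M) x = support_fun M (adjoint g x)"
proof -
  have "(\<lambda>y. x \<bullet> y) ` g ` M = (\<lambda>y. adjoint g x \<bullet> y) ` M"
    unfolding image_image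
    by (intro image_cong refl) (metis adjoint_works[OF assms] inner_commute)
  then show ?thesis unfolding support_fun_def by simp
qed

lemma sf_eq:
  assumes M: "M \<in> Ko" and N: "N \<in> Ko"
    and h: "\<And>x. support_fun M x = support_fun N x"
  shows "M \<subseteq> N"
proof
  fix z assume z: "z \<in> M"
  show "z \<in> N"
  proof (rule ccontr)
    assume zn: "z \<notin> N"
    have "convex N" "closed N" "N \<noteq> {}"
      using N by (auto simp: Ko_def convex_body_def compact_imp_closed)
    then obtain a b where ab: "a \<bullet> z < b" "\<forall>x\<in>N. a \<bullet> x > b"
      using separating_hyperplane_closed_point[of N z] zn by blast
    have "support_fun N (-a) \<le> -b"
      unfolding support_fun_def using \<open>N \<noteq> {}\<close> ab(2)
      by (intro cSup_least) (auto simp: less_imp_le)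
    moreover have "(-a) \<bullet> z \<le> support_fun M (-a)"
      unfolding support_fun_def using Ko_bdd[OF M] z by (intro cSup_upper imageI)
    ultimately show False using h[of "-a"] ab(1) by simp
  qed
qed

lemma powr_cancel:
  fixes a b p :: real
  assumes "a \<ge> 0" "b \<ge> 0" "p > 0" "a powr p = b powr p"
  shows "a = b"
proof -
  have e: "p * (1/p) = 1" using assms(3) by simp
  have "(a powr p) powr (1/p) = a powr (p * (1/p))" by (rule powr_powr)
  also have "\<dots> = a" unfolding e using assms(1) by (rule powr_one)
  finally have 1: "(a powr p) powr (1/p) = a" .
  have "(b powr p) powr (1/p) = b powr (p * (1/p))" by (rule powr_powr)
  also have "\<dots> = b" unfolding e using assms(2) by (rule powr_one)
  finally have 2: "(b powr p) powr (1/p) = b" .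
  have "a = (a powr p) powr (1/p)" using 1 by (rule sym)
  also have "\<dots> = (b powr p) powr (1/p)" using assms(4) by (rule arg_cong)
  also have "\<dots> = b" by (rule 2)
  finally show ?thesis .
qed

lemma Ko_image:
  fixes f :: "real^'n \<Rightarrow> real^'n"
  assumes "linear f" "K \<in> Ko"
  shows "f ` K \<in> Ko"
proof -
  have "f 0 = 0" using assms(1) by (rule linear_0)
  then have "0 \<in> f ` K" using assms(2) unfolding Ko_def by (metis (mono_tags) mem_Collect_eq image_eqI)
  moreover have "compact (f ` K)" using assms
    by (metis Ko_def convex_body_def mem_Collect_eq compact_continuous_image linear_continuous_on linear_conv_bounded_linear)
  moreover have "convex (f ` K)" using assms
    by (metis Ko_def convex_body_def mem_Collect_eq convex_linear_image)
  ultimately show ?thesis unfolding Ko_def convex_body_def by auto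
qed

lemma main_ext:
  fixes f g :: "real^'n \<Rightarrow> real^'n" and Y :: "(real^'n) set \<Rightarrow> (real^'n) set"
  assumes p: "p \<ge> 1" and V: "Lp_Minkowski_valuation p Y"
    and lf: "linear f" and inj: "inj f" and lg: "linear g"
    and H: "\<And>K. K \<in> Ko \<Longrightarrow> aff_dim K = int CARD('n) \<Longrightarrow> Y (f ` K) = g ` Y K"
  shows "K \<in> Ko \<Longrightarrow> Y (f ` K) = g ` Y K"
proof -
  have VKo: "\<And>K. K \<in> Ko \<Longrightarrow> Y K \<in> Ko" using V by (simp add: Lp_Minkowski_valuation_def)
  have Vv: "\<And>K L x. K \<in> Ko \<Longrightarrow> L \<in> Ko \<Longrightarrow> K \<union> L \<in> Ko \<Longrightarrow>
        support_fun (Y (K \<union> L)) x powr p + support_fun (Y (K \<inter> L)) x powr p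
             = support_fun (Y K) x powr p + support_fun (Y L) x powr p"
    using V unfolding Lp_Minkowski_valuation_def by blast
  have "\<forall>K. K \<in> Ko \<longrightarrow> nat (int CARD('n) - aff_dim K) = d \<longrightarrow> Y (f ` K) = g ` Y K" for d
  proof (induction d rule: less_induct)
    case (less d)
    show ?case
    proof (intro allI impI)
      fix K :: "(real^'n) set"
      assume K: "K \<in> Ko" and d: "nat (int CARD('n) - aff_dim K) = d"
      have le: "aff_dim K \<le> int CARD('n)" using aff_dim_le_DIM[of K] by simp
      have IH: "\<And>L. L \<in> Ko \<Longrightarrow> aff_dim L > aff_dim K \<Longrightarrow> Y (f ` L) = g ` Y L"
      proof -
        fix L :: "(real^'n) set" assume L: "L \<in> Ko" "aff_dim L > aff_dim K"
        have "aff_dim L \<le> int CARD('n)" using aff_dim_le_DIM[of L] by simp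
        then have "nat (int CARD('n) - aff_dim L) < d" using L(2) d le by linarith
        then show "Y (f ` L) = g ` Y L" using less.IH L(1) by blast
      qed
      show "Y (f ` K) = g ` Y K"
      proof (cases "aff_dim K = int CARD('n)")
        case True then show ?thesis using H K by blast
      next
        case False
        then have lt: "aff_dim K < int CARD('n)" using le by simp
        have Kb: "convex_body K \<and> 0 \<in> K" using K by (simp add: Ko_def)
        then have K0: "0 \<in> K" and Kc: "compact K" and Kv: "convex K"
          unfolding convex_body_def by blast+
        have ah: "affine hull K = span K"
          by (rule affine_hull_span_0) (rule hull_inc[OF K0])
        have "span K \<noteq> UNIV"
        proof
          assume "span K = UNIV"
          then have "aff_dim (affine hull K) = aff_dim (UNIV::(real^'n) set)"
            unfolding ah by simp
          then have "aff_dim K = aff_dim (UNIV::(real^'n) set)" by simp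
          then show False using lt by simp
        qed
        then obtain u where u: "u \<notin> span K" by blast
        have mu: "-u \<notin> span K"
        proof
          assume "-u \<in> span K"
          then have "- (-u) \<in> span K" by (rule span_neg)
          then show False using u by simp
        qed
        define S where "S a b = (\<lambda>s. s *\<^sub>R u) ` {a..b}" for a b :: real
        define Ms where "Ms T = (\<Union>x\<in>K. \<Union>y\<in>T. {x + y})" for T
        have Sc: "compact (S a b)" for a b unfolding S_def
          by (intro compact_continuous_image continuous_intros) simp
        have Sv: "convex (S a b)" for a b unfolding S_def
          by (intro convex_linear_image linear_scaleR_left) simp
        have S0: "0 \<in> S a b" if "a \<le> 0" "0 \<le> b" for a b
          unfolding S_def using that by (intro image_eqI[of _ _ 0]) auto
        have MsKo: "Ms T \<in> Ko" if "compact T" "convex T" "0 \<in> T" for T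
        proof -
          have "0 \<in> Ms T" unfolding Ms_def using K0 that(3) by force
          moreover have "compact (Ms T)" unfolding Ms_def using compact_sums'[OF Kc that(1)] .
          moreover have "convex (Ms T)" unfolding Ms_def using convex_sums[OF Kv that(2)] .
          ultimately show ?thesis unfolding Ko_def convex_body_def by auto
        qed
        have mem: "k + s *\<^sub>R u \<in> Ms (S a b)" if "k \<in> K" "s \<in> {a..b}" for k s a b
          unfolding Ms_def S_def using that by blast
        define L1 where "L1 = Ms (S 0 1)"
        define L2 where "L2 = Ms (S (-1) 0)"
        have L1Ko: "L1 \<in> Ko" unfolding L1_def by (intro MsKo Sc Sv S0) auto
        have L2Ko: "L2 \<in> Ko" unfolding L2_def by (intro MsKo Sc Sv S0) auto
        have U: "L1 \<union> L2 = Ms (S (-1) 1)"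
        proof
          show "L1 \<union> L2 \<subseteq> Ms (S (-1) 1)"
            unfolding L1_def L2_def Ms_def S_def by force
          show "Ms (S (-1) 1) \<subseteq> L1 \<union> L2"
          proof
            fix z assume "z \<in> Ms (S (-1) 1)"
            then obtain k s where ks: "k \<in> K" "s \<in> {-1..1}" "z = k + s *\<^sub>R u"
              unfolding Ms_def S_def by blast
            show "z \<in> L1 \<union> L2"
            proof (cases "s \<ge> 0")
              case True
              then have "z \<in> L1" unfolding L1_def using ks mem[of k s 0 1] by simp
              then show ?thesis by blast
            next
              case False
              then have "z \<in> L2" unfolding L2_def using ks mem[of k s "-1" 0] by simp
              then show ?thesis by blast
            qed
          qed
        qed
        have UKo: "L1 \<union> L2 \<in> Ko" unfolding U by (intro MsKo Sc Sv S0) auto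
        have I: "L1 \<inter> L2 = K"
        proof
          show "K \<subseteq> L1 \<inter> L2"
          proof
            fix k assume k: "k \<in> K"
            have "k + 0 *\<^sub>R u \<in> L1" unfolding L1_def using k by (intro mem) auto
            moreover have "k + 0 *\<^sub>R u \<in> L2" unfolding L2_def using k by (intro mem) auto
            ultimately show "k \<in> L1 \<inter> L2" by simp
          qed
          show "L1 \<inter> L2 \<subseteq> K"
          proof
            fix z assume "z \<in> L1 \<inter> L2"
            then obtain k1 s k2 r where a: "k1 \<in> K" "s \<in> {0..1}" "z = k1 + s *\<^sub>R u"
              and b: "k2 \<in> K" "r \<in> {-1..0}" "z = k2 + r *\<^sub>R u"
              unfolding L1_def L2_def Ms_def S_def by blast
            show "z \<in> K"
            proof (cases "s = r")
              case True
              then have "s = 0" using a(2) b(2) by simp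
              then show ?thesis using a by simp
            next
              case False
              have e: "(s - r) *\<^sub>R u = k2 - k1" using a(3) b(3) by (simp add: algebra_simps)
              have "u = (1 / (s - r)) *\<^sub>R ((s - r) *\<^sub>R u)" using False by simp
              also have "\<dots> = (1 / (s - r)) *\<^sub>R (k2 - k1)" using e by (rule arg_cong)
              finally have "u = (1 / (s - r)) *\<^sub>R (k2 - k1)" .
              moreover have "(1 / (s - r)) *\<^sub>R (k2 - k1) \<in> span K"
                using a(1) b(1) by (intro span_mul span_diff span_base)
              ultimately show ?thesis using u by simp
            qed
          qed
        qed
        have "insert u K \<subseteq> L1"
        proof
          fix z assume "z \<in> insert u K"
          then show "z \<in> L1"
          proof
            assume "z = u"
            have "0 + 1 *\<^sub>R u \<in> L1" unfolding L1_def using K0 by (intro mem) auto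
            then show "z \<in> L1" using \<open>z = u\<close> by simp
          next
            assume "z \<in> K"
            then have "z + 0 *\<^sub>R u \<in> L1" unfolding L1_def by (intro mem) auto
            then show "z \<in> L1" by simp
          qed
        qed
        then have "aff_dim (insert u K) \<le> aff_dim L1" by (rule aff_dim_subset)
        moreover have "u \<notin> affine hull K" unfolding ah by (rule u)
        then have "aff_dim (insert u K) = aff_dim K + 1"
          unfolding aff_dim_insert by (rule if_not_P)
        ultimately have d1: "aff_dim L1 > aff_dim K" by linarith
        have "insert (-u) K \<subseteq> L2"
        proof
          fix z assume "z \<in> insert (-u) K"
          then show "z \<in> L2"
          proof
            assume "z = -u"
            have "0 + (-1) *\<^sub>R u \<in> L2" unfolding L2_def using K0 by (intro mem) auto
            then show "z \<in> L2" using \<open>z = -u\<close> by simp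
          next
            assume "z \<in> K"
            then have "z + 0 *\<^sub>R u \<in> L2" unfolding L2_def by (intro mem) auto
            then show "z \<in> L2" by simp
          qed
        qed
        then have "aff_dim (insert (-u) K) \<le> aff_dim L2" by (rule aff_dim_subset)
        moreover have "-u \<notin> affine hull K" unfolding ah by (rule mu)
        then have "aff_dim (insert (-u) K) = aff_dim K + 1"
          unfolding aff_dim_insert by (rule if_not_P)
        ultimately have d2: "aff_dim L2 > aff_dim K" by linarith
        have d3: "aff_dim (L1 \<union> L2) > aff_dim K"
          using d1 aff_dim_subset[of L1 "L1 \<union> L2"] by simp
        have E1: "Y (f ` L1) = g ` Y L1" by (rule IH[OF L1Ko d1])
        have E2: "Y (f ` L2) = g ` Y L2" by (rule IH[OF L2Ko d2])
        have E3: "Y (f ` (L1 \<union> L2)) = g ` Y (L1 \<union> L2)" by (rule IH[OF UKo d3])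
        have fU: "f ` L1 \<union> f ` L2 = f ` (L1 \<union> L2)" by (rule image_Un[symmetric])
        have fI: "f ` L1 \<inter> f ` L2 = f ` K" using I image_Int[OF inj] by metis
        have fKo1: "f ` L1 \<in> Ko" "f ` L2 \<in> Ko" "f ` (L1 \<union> L2) \<in> Ko" "f ` K \<in> Ko"
          using Ko_image[OF lf] L1Ko L2Ko UKo K by auto
        have YfK: "Y (f ` K) \<in> Ko" using VKo fKo1(4) .
        have gYK: "g ` Y K \<in> Ko" using Ko_image[OF lg VKo[OF K]] .
        have pp: "p > 0" using p by simp
        have hx: "support_fun (Y (f ` K)) x = support_fun (g ` Y K) x" for x
        proof -
          define y where "y = adjoint g x"
          have A: "support_fun (Y (f ` (L1 \<union> L2))) x powr p + support_fun (Y (f ` K)) x powr p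
             = support_fun (Y (f ` L1)) x powr p + support_fun (Y (f ` L2)) x powr p"
            using Vv[OF fKo1(1,2), of x] fKo1(3) unfolding fU fI by simp
          have B: "support_fun (Y (L1 \<union> L2)) y powr p + support_fun (Y K) y powr p
             = support_fun (Y L1) y powr p + support_fun (Y L2) y powr p"
            using Vv[OF L1Ko L2Ko UKo, of y] unfolding I by simp
          have "support_fun (Y (f ` K)) x powr p = support_fun (Y K) y powr p"
            using A B unfolding E1 E2 E3 sf_lin[OF lg] y_def by linarith
          also have "\<dots> = support_fun (g ` Y K) x powr p"
            unfolding sf_lin[OF lg] y_def ..
          finally show ?thesis
            by (rule powr_cancel[OF sf_nonneg[OF YfK] sf_nonneg[OF gYK] pp])
        qed
        show ?thesis
          using sf_eq[OF YfK gYK hx] sf_eq[OF gYK YfK hx[symmetric]] by blast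
      qed
    qed
  qed
  then show "K \<in> Ko \<Longrightarrow> Y (f ` K) = g ` Y K" by blast
qed

theorem lemma4p2:
  fixes Y :: "(real^'n) set \<Rightarrow> (real^'n) set" and p q :: real
  assumes "p \<ge> 1"
    and "Lp_Minkowski_valuation p Y"
  shows
   "((\<forall>K\<in>Ko. aff_dim K = int CARD('n) \<longrightarrow>
        (\<forall>A\<in>SL. Y (lin_image A K) = lin_image A (Y K)) \<and>
        (\<forall>t>0. Y ((\<lambda>x. t *\<^sub>R x) ` K) = (\<lambda>x. (t powr q) *\<^sub>R x) ` Y K))
     \<longrightarrow>
     (\<forall>K\<in>Ko.
        (\<forall>A\<in>SL. Y (lin_image A K) = lin_image A (Y K)) \<and>
        (\<forall>t>0. Y ((\<lambda>x. t *\<^sub>R x) ` K) = (\<lambda>x. (t powr q) *\<^sub>R x) ` Y K)))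
    \<and>
    ((\<forall>K\<in>Ko. aff_dim K = int CARD('n) \<longrightarrow>
        (\<forall>A\<in>SL. Y (lin_image A K) = lin_image (inv_transpose A) (Y K)) \<and>
        (\<forall>t>0. Y ((\<lambda>x. t *\<^sub>R x) ` K) = (\<lambda>x. (t powr q) *\<^sub>R x) ` Y K))
     \<longrightarrow>
     (\<forall>K\<in>Ko.
        (\<forall>A\<in>SL. Y (lin_image A K) = lin_image (inv_transpose A) (Y K)) \<and>
        (\<forall>t>0. Y ((\<lambda>x. t *\<^sub>R x) ` K) = (\<lambda>x. (t powr q) *\<^sub>R x) ` Y K)))"
proof -
  have lin: "linear ((*v) A)" for A :: "real^'n^'n" by simp
  have injA: "inj ((*v) A)" if "A \<in> SL" for A :: "real^'n^'n"
    using that by (intro inj_matrix_vector_mult) (simp add: SL_def invertible_det_nz)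
  have injt: "inj (\<lambda>x::real^'n. t *\<^sub>R x)" if "t > 0" for t :: real
    using that by (auto simp: inj_on_def)
  have scal: "\<And>K. K \<in> Ko \<Longrightarrow> (\<And>K. K \<in> Ko \<Longrightarrow> aff_dim K = int CARD('n) \<Longrightarrow>
        (\<forall>t>0. Y ((\<lambda>x. t *\<^sub>R x) ` K) = (\<lambda>x. (t powr q) *\<^sub>R x) ` Y K)) \<Longrightarrow>
        (\<forall>t>0. Y ((\<lambda>x. t *\<^sub>R x) ` K) = (\<lambda>x. (t powr q) *\<^sub>R x) ` Y K)"
  proof (intro allI impI)
    fix K :: "(real^'n) set" and t :: real assume K: "K \<in> Ko" and t: "(0::real) < t"
      and h: "\<And>K. K \<in> Ko \<Longrightarrow> aff_dim K = int CARD('n) \<Longrightarrow>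
        (\<forall>t>0. Y ((\<lambda>x. t *\<^sub>R x) ` K) = (\<lambda>x. (t powr q) *\<^sub>R x) ` Y K)"
    show "Y ((\<lambda>x. t *\<^sub>R x) ` K) = (\<lambda>x. (t powr q) *\<^sub>R x) ` Y K"
      by (rule main_ext[OF assms linear_scaleR injt[OF t] linear_scaleR _ K])
         (use h t in blast)
  qed
  show ?thesis
  proof (rule conjI; intro impI ballI)
    fix K :: "(real^'n) set" assume h: "\<forall>K\<in>Ko. aff_dim K = int CARD('n) \<longrightarrow>
        (\<forall>A\<in>SL. Y (lin_image A K) = lin_image A (Y K)) \<and>
        (\<forall>t>0. Y ((\<lambda>x. t *\<^sub>R x) ` K) = (\<lambda>x. (t powr q) *\<^sub>R x) ` Y K)"
      and K: "K \<in> Ko"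
    show "(\<forall>A\<in>SL. Y (lin_image A K) = lin_image A (Y K)) \<and>
        (\<forall>t>0. Y ((\<lambda>x. t *\<^sub>R x) ` K) = (\<lambda>x. (t powr q) *\<^sub>R x) ` Y K)"
    proof
      show "\<forall>A\<in>SL. Y (lin_image A K) = lin_image A (Y K)"
      proof
        fix A :: "real^'n^'n" assume A: "A \<in> SL"
        show "Y (lin_image A K) = lin_image A (Y K)"
          unfolding lin_image_def
          by (rule main_ext[OF assms lin injA[OF A] lin _ K])
             (use h A in \<open>auto simp: lin_image_def\<close>)
      qed
      show "\<forall>t>0. Y ((\<lambda>x. t *\<^sub>R x) ` K) = (\<lambda>x. (t powr q) *\<^sub>R x) ` Y K"
        by (rule scal[OF K]) (use h in blast)
    qed
  next
    fix K :: "(real^'n) set" assume h: "\<forall>K\<in>Ko. aff_dim K = int CARD('n) \<longrightarrow>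
        (\<forall>A\<in>SL. Y (lin_image A K) = lin_image (inv_transpose A) (Y K)) \<and>
        (\<forall>t>0. Y ((\<lambda>x. t *\<^sub>R x) ` K) = (\<lambda>x. (t powr q) *\<^sub>R x) ` Y K)"
      and K: "K \<in> Ko"
    show "(\<forall>A\<in>SL. Y (lin_image A K) = lin_image (inv_transpose A) (Y K)) \<and>
        (\<forall>t>0. Y ((\<lambda>x. t *\<^sub>R x) ` K) = (\<lambda>x. (t powr q) *\<^sub>R x) ` Y K)"
    proof
      show "\<forall>A\<in>SL. Y (lin_image A K) = lin_image (inv_transpose A) (Y K)"
      proof
        fix A :: "real^'n^'n" assume A: "A \<in> SL"
        show "Y (lin_image A K) = lin_image (inv_transpose A) (Y K)"
          unfolding lin_image_def
          by (rule main_ext[OF assms lin injA[OF A] lin _ K])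
             (use h A in \<open>auto simp: lin_image_def\<close>)
      qed
      show "\<forall>t>0. Y ((\<lambda>x. t *\<^sub>R x) ` K) = (\<lambda>x. (t powr q) *\<^sub>R x) ` Y K"
        by (rule scal[OF K]) (use h in blast)
    qed
  qed
qed

end
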